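(* Let $N, M_1, M_2, P, R_1, R_2, \widetilde{M}_2, \widetilde{P}$ be positive integers with $\widetilde{M}_2 \le M_2$, $\widetilde{P}\le P$. Let $\mathbf{y}\in\mathbb{C}^N$, $\mathbf{H}\in\mathbb{C}^{N\times M_1}$ and $\mathcal{M}\in\mathbb{R}^{N\times M_2\times P}$ be as in the context. Let $\mathbf{U}_2\in\mathbb{R}^{M_2\times\widetilde{M}_2}$ and $\mathbf{U}_3\in\mathbb{R}^{P\times\widetilde{P}}$ have orthonormal columns, and set $\widetilde{\mathcal{M}}=\mathcal{M}\times_2\mathbf{U}_2^\top\times_3\mathbf{U}_3^\top$ and $\widehat{\mathcal{M}}=\mathcal{M}\times_2\mathbf{U}_2\mathbf{U}_2^\top\times_3\mathbf{U}_3\mathbf{U}_3^\top$. Suppose $(\mathbf{A}^\star,\mathcal{B}^\star,\mathbf{C}^\star)$, with $\mathbf{A}^\star\in\mathbb{C}^{M_1\times R_1}$, $\mathcal{B}^\star\in\mathbb{C}^{R_1\times M_2\times R_2}$, $\mathbf{C}^\star\in\mathbb{C}^{R_2\times P}$, attains $$m_{\mathrm{TT}}:=\min_{\mathbf{A},\mathcal{B},\mathbf{C}}\Big\|\mathbf{y}-\sum_{r_1=1}^{R_1}\sum_{r_2=1}^{R_2} \mathbf{H}\mathbf{A}_{:r_1}\odot\big(\mathcal{M}\times_2\mathcal{B}_{r_1:r_2}\times_3\mathbf{C}_{r_2:}\big)\Big\|_F$$ over $\mathbf{A}\in\mathbb{C}^{M_1\times R_1},\mathcal{B}\in\mathbb{C}^{R_1\times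 M_2\times R_2},\mathbf{C}\in\mathbb{C}^{R_2\times P}$. Then $$\inf_{\substack{\mathbf{A}\in\mathbb{C}^{M_1\times R_1}\\ \widetilde{\mathcal{B}}\in\mathbb{C}^{R_1\times\widetilde{M}_2\times R_2}\\ \widetilde{\mathbf{C}}\in\mathbb{C}^{R_2\times\widetilde{P}}}}\Big\|\mathbf{y}-\sum_{r_1=1}^{R_1}\sum_{r_2=1}^{R_2} \mathbf{H}\mathbf{A}_{:r_1}\odot\big(\widetilde{\mathcal{M}}\times_2\widetilde{\mathcal{B}}_{r_1:r_2}\times_3\widetilde{\mathbf{C}}_{r_2:}\big)\Big\|_F \le m_{\mathrm{TT}}+\|\mathcal{M}-\widehat{\mathcal{M}}\|_F\sum_{r_1=1}^{R_1}\sum_{r_2=1}^{R_2}\|\mathbf{H}\mathbf{A}^\star_{:r_1}\|_\infty\|\mathcal{B}^\star_{r_1:r_2}\|_F\|\mathbf{C}^\star_{r_2:}\|_F.$$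
   Context: Let $x(t)$, $t\in\mathbb{Z}$, be a complex-valued input signal and $y(t)$ a complex-valued output signal, $t_0\in\mathbb{Z}$. Define $\mathbf{y}=(y(t_0),\dots,y(t_0+N-1))^\top\in\mathbb{C}^N$; $\mathbf{H}\in\mathbb{C}^{N\times M_1}$ with entries $h_{ni}=x(t_0+n-i)$ ($n=0,\dots,N-1$, $i=0,\dots,M_1-1$); and $\mathcal{M}\in\mathbb{R}^{N\times M_2\times P}$ with entries $\mathcal{M}_{njp}=|x(t_0+n-j)|^p$ ($j=0,\dots,M_2-1$, $p=0,\dots,P-1$, with $0^0=1$). Mode-$k$ product of a tensor $\mathcal{X}\in\mathbb{C}^{I_1\times I_2\times I_3}$ with a matrix $\mathbf{Q}\in\mathbb{C}^{n\times I_k}$: replace mode $k$ by $n$ with $(\mathcal{X}\times_k\mathbf{Q})_{\dots j\dots}=\sum_{i_k}\mathcal{X}_{\dots i_k\dots}q_{j i_k}$ (no conjugation). Mode-$k$ product with a vector $\mathbf{v}\in\mathbb{C}^{I_k}$ contracts mode $k$: $(\mathcal{X}\times_k\mathbf{v})=\sum_{i_k}\mathcal{X}_{\dots i_k\dots}v_{i_k}$, removing that mode; in particular $(\mathcal{M}\times_2\mathbf{b}\times_3\mathbf{c})_n=\sum_{j,p}\mathcal{M}_{njp}b_jc_p$. $\mathbf{A}_{:r}$ is the $r$-th column and $\mathbf{C}_{r:}$ the $r$-th row (as a vector) of a matrix; $\mathcal{B}_{r_1:r_2}\in\mathbb{C}^{M_2}$ is the mode-2 fiber of $\mathcal{B}$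 with first index $r_1$ and third index $r_2$. $\odot$ is the entrywise (Hadamard) product; $\|\cdot\|_F$ is the Frobenius (Euclidean for vectors) norm; $\|\cdot\|_\infty$ is the maximum modulus of the entries of a vector. *)

theory Defs
  imports "HOL-Analysis.Analysis"
begin

text \<open>Vectors, matrices and 3-tensors are represented as functions on natural
  indices (0-based); only entries within the stated index bounds are ever used.\<close>

definition yvec :: "(int \<Rightarrow> complex) \<Rightarrow> int \<Rightarrow> nat \<Rightarrow> complex" where
  "yvec y t0 n = y (t0 + int n)"

definition Hmat :: "(int \<Rightarrow> complex) \<Rightarrow> int \<Rightarrow> nat \<Rightarrow> nat \<Rightarrow> complex" where
  "Hmat x t0 n i = x (t0 + int n - int i)"

text \<open>Note \<open>0 ^ 0 = 1\<close> holds for \<open>^\<close> in Isabelle.\<close>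
definition Mten :: "(int \<Rightarrow> complex) \<Rightarrow> int \<Rightarrow> nat \<Rightarrow> nat \<Rightarrow> nat \<Rightarrow> real" where
  "Mten x t0 n j p = cmod (x (t0 + int n - int j)) ^ p"

text \<open>Entry n of the model
  \<open>\<Sum>r1 r2. (H A_{:r1}) \<odot> (T \<times>_2 B_{r1:r2} \<times>_3 C_{r2:})\<close>,
  where T has mode sizes (N, J, Q).\<close>
definition model ::
  "nat \<Rightarrow> nat \<Rightarrow> nat \<Rightarrow> nat \<Rightarrow> nat \<Rightarrow> (nat \<Rightarrow> nat \<Rightarrow> complex) \<Rightarrow> (nat \<Rightarrow> nat \<Rightarrow> nat \<Rightarrow> real)
   \<Rightarrow> (nat \<Rightarrow> nat \<Rightarrow> complex) \<Rightarrow> (nat \<Rightarrow> nat \<Rightarrow> nat \<Rightarrow> complex) \<Rightarrow> (nat \<Rightarrow> nat \<Rightarrow> complex)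
   \<Rightarrow> nat \<Rightarrow> complex" where
  "model M1 J Q R1 R2 H T A B C n =
     (\<Sum>r1<R1. \<Sum>r2<R2.
        (\<Sum>i<M1. H n i * A i r1) *
        (\<Sum>j<J. \<Sum>p<Q. complex_of_real (T n j p) * B r1 j r2 * C r2 p))"

definition resid ::
  "nat \<Rightarrow> nat \<Rightarrow> nat \<Rightarrow> nat \<Rightarrow> nat \<Rightarrow> nat \<Rightarrow> (nat \<Rightarrow> complex) \<Rightarrow> (nat \<Rightarrow> nat \<Rightarrow> complex)
   \<Rightarrow> (nat \<Rightarrow> nat \<Rightarrow> nat \<Rightarrow> real) \<Rightarrow> (nat \<Rightarrow> nat \<Rightarrow> complex) \<Rightarrow> (nat \<Rightarrow> nat \<Rightarrow> nat \<Rightarrow> complex)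
   \<Rightarrow> (nat \<Rightarrow> nat \<Rightarrow> complex) \<Rightarrow> real" where
  "resid N M1 J Q R1 R2 yv H T A B C =
     sqrt (\<Sum>n<N. (cmod (yv n - model M1 J Q R1 R2 H T A B C n))\<^sup>2)"

definition orthonormal_cols :: "nat \<Rightarrow> nat \<Rightarrow> (nat \<Rightarrow> nat \<Rightarrow> real) \<Rightarrow> bool" where
  "orthonormal_cols m k U \<longleftrightarrow>
     (\<forall>a<k. \<forall>b<k. (\<Sum>j<m. U j a * U j b) = (if a = b then 1 else 0))"

text \<open>\<open>T \<times>_2 U2\<^sup>T \<times>_3 U3\<^sup>T\<close> for T of size N x M2 x P.\<close>
definition Mtilde :: "nat \<Rightarrow> nat \<Rightarrow> (nat \<Rightarrow> nat \<Rightarrow> real) \<Rightarrow> (nat \<Rightarrow> nat \<Rightarrow> real)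
   \<Rightarrow> (nat \<Rightarrow> nat \<Rightarrow> nat \<Rightarrow> real) \<Rightarrow> nat \<Rightarrow> nat \<Rightarrow> nat \<Rightarrow> real" where
  "Mtilde M2 P U2 U3 T n k q = (\<Sum>j<M2. \<Sum>p<P. T n j p * U2 j k * U3 p q)"

text \<open>\<open>T \<times>_2 U2 U2\<^sup>T \<times>_3 U3 U3\<^sup>T\<close> for T of size N x M2 x P.\<close>
definition Mhat :: "nat \<Rightarrow> nat \<Rightarrow> nat \<Rightarrow> nat \<Rightarrow> (nat \<Rightarrow> nat \<Rightarrow> real) \<Rightarrow> (nat \<Rightarrow> nat \<Rightarrow> real)
   \<Rightarrow> (nat \<Rightarrow> nat \<Rightarrow> nat \<Rightarrow> real) \<Rightarrow> nat \<Rightarrow> nat \<Rightarrow> nat \<Rightarrow> real" where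
  "Mhat M2 P M2t Pt U2 U3 T n j p =
     (\<Sum>j'<M2. \<Sum>p'<P. T n j' p' * (\<Sum>k<M2t. U2 j k * U2 j' k) * (\<Sum>q<Pt. U3 p q * U3 p' q))"

definition frob3 :: "nat \<Rightarrow> nat \<Rightarrow> nat \<Rightarrow> (nat \<Rightarrow> nat \<Rightarrow> nat \<Rightarrow> real) \<Rightarrow> real" where
  "frob3 N J Q T = sqrt (\<Sum>n<N. \<Sum>j<J. \<Sum>p<Q. (T n j p)\<^sup>2)"

definition vnorm :: "nat \<Rightarrow> (nat \<Rightarrow> complex) \<Rightarrow> real" where
  "vnorm K v = sqrt (\<Sum>k<K. (cmod (v k))\<^sup>2)"

definition vnorm_inf :: "nat \<Rightarrow> (nat \<Rightarrow> complex) \<Rightarrow> real" where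
  "vnorm_inf K v = Max ((\<lambda>k. cmod (v k)) ` {..<K})"

end

theory Submission imports Defs begin

definition nrm :: "nat \<Rightarrow> (nat \<Rightarrow> complex) \<Rightarrow> real" where
  "nrm N v = L2_set (\<lambda>n. cmod (v n)) {..<N}"

lemma nrm_nonneg: "0 \<le> nrm N v" by (simp add: nrm_def)

lemma nrm_add: "nrm N (\<lambda>n. a n + b n) \<le> nrm N a + nrm N b"
proof -
  have "nrm N (\<lambda>n. a n + b n) \<le> L2_set (\<lambda>n. cmod (a n) + cmod (b n)) {..<N}"
    unfolding nrm_def by (rule L2_set_mono) (auto simp: norm_triangle_ineq)
  also have "\<dots> \<le> nrm N a + nrm N b" unfolding nrm_def by (rule L2_set_triangle_ineq)
  finally show ?thesis .
qed

lemma nrm_sum: "finite S \<Longrightarrow> nrm N (\<lambda>n. \<Sum>r\<in>S. f r n) \<le> (\<Sum>r\<in>S. nrm N (f r))"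
proof (induction S rule: finite_induct)
  case empty thus ?case by (simp add: nrm_def L2_set_def)
next
  case (insert x F)
  have "nrm N (\<lambda>n. \<Sum>r\<in>insert x F. f r n) = nrm N (\<lambda>n. f x n + (\<Sum>r\<in>F. f r n))"
    using insert by simp
  also have "\<dots> \<le> nrm N (f x) + nrm N (\<lambda>n. \<Sum>r\<in>F. f r n)" by (rule nrm_add)
  also have "\<dots> \<le> nrm N (f x) + (\<Sum>r\<in>F. nrm N (f r))" using insert by simp
  finally show ?case using insert by simp
qed

lemma nrm_mult_inf: assumes "0 < N"
  shows "nrm N (\<lambda>n. h n * g n) \<le> vnorm_inf N h * nrm N g"
proof -
  have hb: "cmod (h n) \<le> vnorm_inf N h" if "n < N" for n
    unfolding vnorm_inf_def using that by (intro Max_ge) auto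
  have "nrm N (\<lambda>n. h n * g n) \<le> L2_set (\<lambda>n. vnorm_inf N h * cmod (g n)) {..<N}"
    unfolding nrm_def norm_mult
    by (rule L2_set_mono) (auto intro!: mult_right_mono hb)
  also have "\<dots> = vnorm_inf N h * nrm N g"
    unfolding nrm_def
    by (rule L2_set_right_distrib[symmetric]) (use hb assms in \<open>force intro: order_trans[OF norm_ge_zero]\<close>)
  finally show ?thesis .
qed

lemma cs3:
  fixes D :: "nat \<Rightarrow> nat \<Rightarrow> real" and B C :: "nat \<Rightarrow> complex"
  shows "cmod (\<Sum>j<J. \<Sum>p<Q. complex_of_real (D j p) * B j * C p)
     \<le> sqrt (\<Sum>j<J. \<Sum>p<Q. (D j p)\<^sup>2) * (vnorm J B * vnorm Q C)"
proof -
  let ?S = "{..<J} \<times> {..<Q}"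
  have "cmod (\<Sum>j<J. \<Sum>p<Q. complex_of_real (D j p) * B j * C p)
      \<le> (\<Sum>j<J. \<Sum>p<Q. cmod (complex_of_real (D j p) * B j * C p))"
    by (rule order_trans[OF norm_sum sum_mono]) (rule norm_sum)
  also have "\<dots> = (\<Sum>(j,p)\<in>?S. \<bar>D j p\<bar> * \<bar>cmod (B j) * cmod (C p)\<bar>)"
    by (simp add: sum.cartesian_product norm_mult mult.assoc)
  also have "\<dots> \<le> L2_set (\<lambda>(j,p). D j p) ?S * L2_set (\<lambda>(j,p). cmod (B j) * cmod (C p)) ?S"
    using L2_set_mult_ineq[of "\<lambda>(j,p). D j p" "\<lambda>(j,p). cmod (B j) * cmod (C p)" ?S]
    by (simp add: case_prod_unfold)
  also have "L2_set (\<lambda>(j,p). D j p) ?S = sqrt (\<Sum>j<J. \<Sum>p<Q. (D j p)\<^sup>2)"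
    by (simp add: L2_set_def sum.cartesian_product case_prod_unfold)
  also have "L2_set (\<lambda>(j,p). cmod (B j) * cmod (C p)) ?S = vnorm J B * vnorm Q C"
  proof -
    have "(\<Sum>x\<in>?S. (cmod (B (fst x)) * cmod (C (snd x)))\<^sup>2)
        = (\<Sum>j<J. (cmod (B j))\<^sup>2) * (\<Sum>p<Q. (cmod (C p))\<^sup>2)"
      by (simp add: sum_product power_mult_distrib sum.cartesian_product case_prod_unfold)
    thus ?thesis by (simp add: L2_set_def vnorm_def case_prod_unfold real_sqrt_mult)
  qed
  finally show ?thesis .
qed

lemma rot4: "(\<Sum>a\<in>A. \<Sum>b\<in>B. \<Sum>c\<in>C. \<Sum>d\<in>D. G a b c d) = (\<Sum>b\<in>B. \<Sum>c\<in>C. \<Sum>d\<in>D. \<Sum>a\<in>A. G a b c d)"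
  by ((subst sum.swap, rule sum.cong[OF refl])+) simp
lemma rot6: "(\<Sum>a\<in>A. \<Sum>b\<in>B. \<Sum>c\<in>C. \<Sum>d\<in>D. \<Sum>e\<in>E. \<Sum>f\<in>F. G a b c d e f) = (\<Sum>b\<in>B. \<Sum>c\<in>C. \<Sum>d\<in>D. \<Sum>e\<in>E. \<Sum>f\<in>F. \<Sum>a\<in>A. G a b c d e f)"
  by ((subst sum.swap, rule sum.cong[OF refl])+) simp

lemma perm6: "(\<Sum>k\<in>K. \<Sum>q\<in>Q. \<Sum>j\<in>J. \<Sum>p\<in>P. \<Sum>j'\<in>J'. \<Sum>p'\<in>P'. F k q j p j' p')
       = (\<Sum>j'\<in>J'. \<Sum>p'\<in>P'. \<Sum>j\<in>J. \<Sum>p\<in>P. \<Sum>k\<in>K. \<Sum>q\<in>Q. F k q j p j' p')"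
proof -
  have "(\<Sum>k\<in>K. \<Sum>q\<in>Q. \<Sum>j\<in>J. \<Sum>p\<in>P. \<Sum>j'\<in>J'. \<Sum>p'\<in>P'. F k q j p j' p')
     = (\<Sum>q\<in>Q. \<Sum>j\<in>J. \<Sum>p\<in>P. \<Sum>j'\<in>J'. \<Sum>p'\<in>P'. \<Sum>k\<in>K. F k q j p j' p')" by (rule rot6)
  also have "\<dots> = (\<Sum>j\<in>J. \<Sum>p\<in>P. \<Sum>j'\<in>J'. \<Sum>p'\<in>P'. \<Sum>k\<in>K. \<Sum>q\<in>Q. F k q j p j' p')" by (rule rot6)
  also have "\<dots> = (\<Sum>p\<in>P. \<Sum>j'\<in>J'. \<Sum>p'\<in>P'. \<Sum>j\<in>J. \<Sum>k\<in>K. \<Sum>q\<in>Q. F k q j p j' p')" by (rule rot4)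
  also have "\<dots> = (\<Sum>j'\<in>J'. \<Sum>p'\<in>P'. \<Sum>j\<in>J. \<Sum>p\<in>P. \<Sum>k\<in>K. \<Sum>q\<in>Q. F k q j p j' p')" by (rule rot4)
  finally show ?thesis .
qed

lemma inner_eq:
  fixes T U2 U3 :: "nat \<Rightarrow> nat \<Rightarrow> real" and B C :: "nat \<Rightarrow> complex"
  shows "(\<Sum>k<K. \<Sum>q<Q. complex_of_real (\<Sum>j<J. \<Sum>p<P. T j p * U2 j k * U3 p q)
            * (\<Sum>j'<J. B j' * complex_of_real (U2 j' k)) * (\<Sum>p'<P. C p' * complex_of_real (U3 p' q)))
       = (\<Sum>j'<J. \<Sum>p'<P. complex_of_real (\<Sum>j<J. \<Sum>p<P. T j p * (\<Sum>k<K. U2 j' k * U2 j k) * (\<Sum>q<Q. U3 p' q * U3 p q)) * B j' * C p')"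
proof -
  have "?thesis \<longleftrightarrow> (\<Sum>k<K. \<Sum>q<Q. \<Sum>j<J. \<Sum>p<P. \<Sum>j'<J. \<Sum>p'<P.
          complex_of_real (T j p * U2 j k * U3 p q * U2 j' k * U3 p' q) * B j' * C p')
       = (\<Sum>j'<J. \<Sum>p'<P. \<Sum>j<J. \<Sum>p<P. \<Sum>k<K. \<Sum>q<Q.
          complex_of_real (T j p * U2 j k * U3 p q * U2 j' k * U3 p' q) * B j' * C p')"
    by (simp add: of_real_sum sum_distrib_left sum_distrib_right mult_ac)
  moreover have "(\<Sum>k<K. \<Sum>q<Q. \<Sum>j<J. \<Sum>p<P. \<Sum>j'<J. \<Sum>p'<P.
          complex_of_real (T j p * U2 j k * U3 p q * U2 j' k * U3 p' q) * B j' * C p')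
       = (\<Sum>j'<J. \<Sum>p'<P. \<Sum>j<J. \<Sum>p<P. \<Sum>k<K. \<Sum>q<Q.
          complex_of_real (T j p * U2 j k * U3 p q * U2 j' k * U3 p' q) * B j' * C p')"
    by (rule perm6)
  ultimately show ?thesis by simp
qed

lemma nrm_cs:
  fixes D :: "nat \<Rightarrow> nat \<Rightarrow> nat \<Rightarrow> real" and B C :: "nat \<Rightarrow> complex"
  shows "nrm N (\<lambda>n. \<Sum>j<J. \<Sum>p<Q. complex_of_real (D n j p) * B j * C p)
     \<le> frob3 N J Q D * (vnorm J B * vnorm Q C)"
proof -
  let ?K = "vnorm J B * vnorm Q C"
  have K0: "0 \<le> ?K" by (simp add: vnorm_def sum_nonneg)
  have "nrm N (\<lambda>n. \<Sum>j<J. \<Sum>p<Q. complex_of_real (D n j p) * B j * C p)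
      \<le> L2_set (\<lambda>n. sqrt (\<Sum>j<J. \<Sum>p<Q. (D n j p)\<^sup>2) * ?K) {..<N}"
    unfolding nrm_def by (rule L2_set_mono) (auto intro: cs3)
  also have "\<dots> = L2_set (\<lambda>n. sqrt (\<Sum>j<J. \<Sum>p<Q. (D n j p)\<^sup>2)) {..<N} * ?K"
    by (rule L2_set_left_distrib[symmetric, OF K0])
  also have "L2_set (\<lambda>n. sqrt (\<Sum>j<J. \<Sum>p<Q. (D n j p)\<^sup>2)) {..<N} = frob3 N J Q D"
    unfolding L2_set_def frob3_def
    by (rule arg_cong[where f=sqrt], rule sum.cong[OF refl], rule real_sqrt_pow2)
       (auto intro!: sum_nonneg)
  finally show ?thesis .
qed

theorem theorem2:
  fixes x y :: "int \<Rightarrow> complex" and t0 :: int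
    and N M1 M2 P R1 R2 M2t Pt :: nat
    and U2 U3 :: "nat \<Rightarrow> nat \<Rightarrow> real"
    and As Cs :: "nat \<Rightarrow> nat \<Rightarrow> complex" and Bs :: "nat \<Rightarrow> nat \<Rightarrow> nat \<Rightarrow> complex"
  assumes pos: "0 < N" "0 < M1" "0 < M2" "0 < P" "0 < R1" "0 < R2" "0 < M2t" "0 < Pt"
    and le: "M2t \<le> M2" "Pt \<le> P"
    and U2: "orthonormal_cols M2 M2t U2"
    and U3: "orthonormal_cols P Pt U3"
    and opt: "\<forall>A B C. resid N M1 M2 P R1 R2 (yvec y t0) (Hmat x t0) (Mten x t0) As Bs Cs
                      \<le> resid N M1 M2 P R1 R2 (yvec y t0) (Hmat x t0) (Mten x t0) A B C"
  shows "(INF (A, B, C) \<in> UNIV.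
            resid N M1 M2t Pt R1 R2 (yvec y t0) (Hmat x t0) (Mtilde M2 P U2 U3 (Mten x t0)) A B C)
         \<le> resid N M1 M2 P R1 R2 (yvec y t0) (Hmat x t0) (Mten x t0) As Bs Cs
           + frob3 N M2 P (\<lambda>n j p. Mten x t0 n j p - Mhat M2 P M2t Pt U2 U3 (Mten x t0) n j p)
             * (\<Sum>r1<R1. \<Sum>r2<R2.
                  vnorm_inf N (\<lambda>n. \<Sum>i<M1. Hmat x t0 n i * As i r1)
                  * vnorm M2 (\<lambda>j. Bs r1 j r2) * vnorm P (\<lambda>p. Cs r2 p))"
proof -
  define yv where "yv = yvec y t0"
  define H where "H = Hmat x t0"
  define T where "T = Mten x t0"
  define Th where "Th = Mhat M2 P M2t Pt U2 U3 T"
  define Bt where "Bt = (\<lambda>r1 k r2. \<Sum>j<M2. Bs r1 j r2 * complex_of_real (U2 j k))"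
  define Ct where "Ct = (\<lambda>r2 q. \<Sum>p<P. Cs r2 p * complex_of_real (U3 p q))"
  define D where "D = (\<lambda>n j p. T n j p - Th n j p)"
  define HA where "HA = (\<lambda>r1 n. \<Sum>i<M1. H n i * As i r1)"
  have E: "model M1 M2t Pt R1 R2 H (Mtilde M2 P U2 U3 T) As Bt Ct n = model M1 M2 P R1 R2 H Th As Bs Cs n" for n
    unfolding model_def Mtilde_def Th_def Mhat_def Bt_def Ct_def
    by (intro sum.cong refl arg_cong2[where f="(*)"] inner_eq)
  have resid_nrm: "resid N a b c d e yv H TT A B C = nrm N (\<lambda>n. yv n - model a b c d e H TT A B C n)"
    for a b c d e TT A B C
    by (simp add: resid_def nrm_def L2_set_def)
  have diff: "model M1 M2 P R1 R2 H T As Bs Cs n - model M1 M2 P R1 R2 H Th As Bs Cs n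
      = (\<Sum>r1<R1. \<Sum>r2<R2. HA r1 n * (\<Sum>j<M2. \<Sum>p<P. complex_of_real (D n j p) * Bs r1 j r2 * Cs r2 p))" for n
    unfolding model_def HA_def D_def
    apply (simp only: sum_subtractf[symmetric])
    apply (intro sum.cong refl)
    apply (simp add: right_diff_distrib sum_subtractf left_diff_distrib of_real_diff)
    done
  have "(INF (A, B, C) \<in> UNIV. resid N M1 M2t Pt R1 R2 yv H (Mtilde M2 P U2 U3 T) A B C)
      \<le> resid N M1 M2t Pt R1 R2 yv H (Mtilde M2 P U2 U3 T) As Bt Ct"
  proof -
    let ?f = "\<lambda>(A, B, C). resid N M1 M2t Pt R1 R2 yv H (Mtilde M2 P U2 U3 T) A B C"
    have bdd: "bdd_below (?f ` UNIV)"
      unfolding bdd_below_def by (rule exI[of _ 0]) (auto simp: resid_def intro!: sum_nonneg)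
    show ?thesis using cINF_lower[OF bdd, of "(As, Bt, Ct)"] by simp
  qed
  also have "\<dots> = nrm N (\<lambda>n. (yv n - model M1 M2 P R1 R2 H T As Bs Cs n)
       + (model M1 M2 P R1 R2 H T As Bs Cs n - model M1 M2 P R1 R2 H Th As Bs Cs n))"
    by (simp add: resid_nrm E)
  also have "\<dots> \<le> resid N M1 M2 P R1 R2 yv H T As Bs Cs
       + nrm N (\<lambda>n. model M1 M2 P R1 R2 H T As Bs Cs n - model M1 M2 P R1 R2 H Th As Bs Cs n)"
    unfolding resid_nrm by (rule nrm_add)
  also have "nrm N (\<lambda>n. model M1 M2 P R1 R2 H T As Bs Cs n - model M1 M2 P R1 R2 H Th As Bs Cs n)
      \<le> frob3 N M2 P D * (\<Sum>r1<R1. \<Sum>r2<R2. vnorm_inf N (HA r1) * vnorm M2 (\<lambda>j. Bs r1 j r2) * vnorm P (\<lambda>p. Cs r2 p))"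
  proof -
    have "nrm N (\<lambda>n. model M1 M2 P R1 R2 H T As Bs Cs n - model M1 M2 P R1 R2 H Th As Bs Cs n)
       \<le> (\<Sum>r1<R1. nrm N (\<lambda>n. \<Sum>r2<R2. HA r1 n * (\<Sum>j<M2. \<Sum>p<P. complex_of_real (D n j p) * Bs r1 j r2 * Cs r2 p)))"
      unfolding diff by (rule nrm_sum) simp
    also have "\<dots> \<le> (\<Sum>r1<R1. \<Sum>r2<R2. nrm N (\<lambda>n. HA r1 n * (\<Sum>j<M2. \<Sum>p<P. complex_of_real (D n j p) * Bs r1 j r2 * Cs r2 p)))"
      by (rule sum_mono, rule nrm_sum) simp
    also have "\<dots> \<le> (\<Sum>r1<R1. \<Sum>r2<R2. vnorm_inf N (HA r1) * (frob3 N M2 P D * (vnorm M2 (\<lambda>j. Bs r1 j r2) * vnorm P (\<lambda>p. Cs r2 p))))"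
    proof (intro sum_mono)
      fix r1 r2
      have vi: "0 \<le> vnorm_inf N (HA r1)"
        unfolding vnorm_inf_def using pos(1)
        by (meson Max_ge finite_imageI finite_lessThan image_eqI lessThan_iff norm_ge_zero order_trans)
      show "nrm N (\<lambda>n. HA r1 n * (\<Sum>j<M2. \<Sum>p<P. complex_of_real (D n j p) * Bs r1 j r2 * Cs r2 p))
          \<le> vnorm_inf N (HA r1) * (frob3 N M2 P D * (vnorm M2 (\<lambda>j. Bs r1 j r2) * vnorm P (\<lambda>p. Cs r2 p)))"
        by (rule order_trans[OF nrm_mult_inf[OF pos(1)]], rule mult_left_mono[OF nrm_cs vi])
    qed
    also have "\<dots> = frob3 N M2 P D * (\<Sum>r1<R1. \<Sum>r2<R2. vnorm_inf N (HA r1) * vnorm M2 (\<lambda>j. Bs r1 j r2) * vnorm P (\<lambda>p. Cs r2 p))"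
      by (simp add: sum_distrib_left mult_ac)
    finally show ?thesis .
  qed
  finally show ?thesis unfolding yv_def H_def T_def D_def Th_def HA_def by simp
qed

end
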